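(* Let $k\ge1$ be an integer with $k\le n$ and $\lambda_k>0$, and let $f\in\ell^2(V,w)$ be nonnegative with $\|f\|_w=1$. Then there exist thresholds $0=t_0\le t_1\le\dots\le t_{2k}=\max_v f(v)$ such that the $(2k+1)$-step approximation $g$ of $f$ with these thresholds satisfies $$\|f-g\|_w^2\le\frac{4\,\mathcal R(f)}{\lambda_k}.$$
   Context: $G=(V,E,w)$ finite undirected, positive edge weights, $w(v)=\sum_{u\sim v}w(u,v)\ge1$, $n=|V|$. $\|f\|_w^2=\sum_v w(v)f(v)^2$; $\mathcal R(f)=\sum_{\{u,v\}\in E}w(u,v)(f(u)-f(v))^2/\|f\|_w^2$. $\lambda_1\le\dots\le\lambda_n$ are the eigenvalues of the normalized Laplacian $I-D^{-1/2}AD^{-1/2}$. Given thresholds $0=t_0\le t_1\le\dots\le t_{2k}$, the $(2k+1)$-step approximation of $f$ is the function $g(v)=$ the element of $\{t_0,\dots,t_{2k}\}$ closest to $f(v)$ (ties broken arbitrarily). *)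

theory Defs
  imports "Jordan_Normal_Form.Char_Poly" "HOL-Library.Multiset"
begin

text \<open>Weighted graph on vertex set V = {0..<n}; w u v is the edge weight
  (positive iff u, v adjacent, 0 otherwise), assumed symmetric.\<close>

definition wdeg :: "nat \<Rightarrow> (nat \<Rightarrow> nat \<Rightarrow> real) \<Rightarrow> nat \<Rightarrow> real" where
  "wdeg n w v = (\<Sum>u<n. w v u)"

definition wnorm2 :: "nat \<Rightarrow> (nat \<Rightarrow> nat \<Rightarrow> real) \<Rightarrow> (nat \<Rightarrow> real) \<Rightarrow> real" where
  "wnorm2 n w f = (\<Sum>v<n. wdeg n w v * (f v)\<^sup>2)"

text \<open>Sum over (unordered) edges {u,v} of w(u,v)(f u - f v)^2, written as half
  the sum over ordered pairs (loops contribute 0).\<close>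
definition rayleigh :: "nat \<Rightarrow> (nat \<Rightarrow> nat \<Rightarrow> real) \<Rightarrow> (nat \<Rightarrow> real) \<Rightarrow> real" where
  "rayleigh n w f = ((\<Sum>u<n. \<Sum>v<n. w u v * (f u - f v)\<^sup>2) / 2) / wnorm2 n w f"

definition norm_laplacian :: "nat \<Rightarrow> (nat \<Rightarrow> nat \<Rightarrow> real) \<Rightarrow> real mat" where
  "norm_laplacian n w = mat n n (\<lambda>(i, j). (if i = j then 1 else 0)
       - w i j / sqrt (wdeg n w i * wdeg n w j))"

text \<open>k-th smallest eigenvalue (1-indexed, counted with algebraic multiplicity).\<close>
definition lap_eig :: "nat \<Rightarrow> (nat \<Rightarrow> nat \<Rightarrow> real) \<Rightarrow> nat \<Rightarrow> real" where
  "lap_eig n w k = sorted_list_of_multiset (proots (char_poly (norm_laplacian n w))) ! (k - 1)"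

definition is_step_approx :: "nat \<Rightarrow> nat \<Rightarrow> (nat \<Rightarrow> real) \<Rightarrow> (nat \<Rightarrow> real) \<Rightarrow> (nat \<Rightarrow> real) \<Rightarrow> bool" where
  "is_step_approx n k t f g \<longleftrightarrow>
     (\<forall>v<n. (\<exists>i\<le>2*k. g v = t i) \<and> (\<forall>i\<le>2*k. \<bar>f v - g v\<bar> \<le> \<bar>f v - t i\<bar>))"

end

theory Submission
  imports Defs "HOL-Computational_Algebra.Fundamental_Theorem_Algebra"
begin


lemma sym_entries:
  assumes A: "A \<in> carrier_mat n n" and sym: "transpose_mat A = A" and "i < n" "j < n"
  shows "A $$ (i,j) = A $$ (j,i)"
proof -
  have "A $$ (i,j) = transpose_mat A $$ (i,j)" using sym by simp
  also have "\<dots> = A $$ (j,i)" using A \<open>i<n\<close> \<open>j<n\<close> by simp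
  finally show ?thesis .
qed

lemma real_sym_eigen:
  fixes A :: "real mat"
  assumes A: "A \<in> carrier_mat n n" and sym: "transpose_mat A = A" and n: "n > 0"
  shows "\<exists>l v. v \<in> carrier_vec n \<and> v \<noteq> 0\<^sub>v n \<and> A *\<^sub>v v = l \<cdot>\<^sub>v v"
proof -
  define Ac where "Ac = map_mat complex_of_real A"
  have Ac: "Ac \<in> carrier_mat n n" using A by (simp add: Ac_def)
  have "degree (char_poly Ac) = n" using degree_monic_char_poly[OF Ac] by simp
  hence "\<not> constant (poly (char_poly Ac))" unfolding constant_degree using n by simp
  then obtain z where "poly (char_poly Ac) z = 0" using fundamental_theorem_of_algebra by blast
  hence "eigenvalue Ac z" using eigenvalue_root_char_poly[OF Ac] by simp
  then obtain v where v: "v \<in> carrier_vec n" "v \<noteq> 0\<^sub>v n" "Ac *\<^sub>v v = z \<cdot>\<^sub>v v"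
    unfolding eigenvalue_def eigenvector_def using Ac by auto
  have eq: "(\<Sum>j=0..<n. complex_of_real (A$$(i,j)) * v$j) = z * v$i" if i: "i < n" for i
  proof -
    have "(Ac *\<^sub>v v) $ i = z * v $ i" using v i by simp
    moreover have "(Ac *\<^sub>v v) $ i = (\<Sum>j=0..<n. complex_of_real (A$$(i,j)) * v$j)"
      unfolding index_mult_mat_vec[OF i[folded carrier_matD(1)[OF Ac]]] scalar_prod_def
      using v Ac A i by (intro sum.cong, auto simp: Ac_def)
    ultimately show ?thesis by simp
  qed
  define a where "a i = Re (v$i)" for i
  define b where "b i = Im (v$i)" for i
  define x where "x = Re z"
  define y where "y = Im z"
  have ra: "(\<Sum>j=0..<n. A$$(i,j) * a j) = x * a i - y * b i" if i: "i < n" for i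
  proof -
    have "Re (\<Sum>j=0..<n. complex_of_real (A$$(i,j)) * v$j) = Re (z * v$i)" using eq[OF i] by simp
    thus ?thesis by (simp add: Re_sum a_def b_def x_def y_def)
  qed
  have rb: "(\<Sum>j=0..<n. A$$(i,j) * b j) = x * b i + y * a i" if i: "i < n" for i
  proof -
    have "Im (\<Sum>j=0..<n. complex_of_real (A$$(i,j)) * v$j) = Im (z * v$i)" using eq[OF i] by simp
    thus ?thesis by (simp add: Im_sum a_def b_def x_def y_def algebra_simps)
  qed
  have S: "(\<Sum>i=0..<n. b i * (\<Sum>j=0..<n. A$$(i,j) * a j)) = (\<Sum>i=0..<n. a i * (\<Sum>j=0..<n. A$$(i,j) * b j))"
  proof -
    have "(\<Sum>i=0..<n. b i * (\<Sum>j=0..<n. A$$(i,j) * a j)) = (\<Sum>i=0..<n. \<Sum>j=0..<n. b i * A$$(i,j) * a j)"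
      by (simp add: sum_distrib_left mult.assoc)
    also have "\<dots> = (\<Sum>j=0..<n. \<Sum>i=0..<n. b i * A$$(i,j) * a j)" by (rule sum.swap)
    also have "\<dots> = (\<Sum>j=0..<n. \<Sum>i=0..<n. a j * A$$(j,i) * b i)"
      by (intro sum.cong refl, simp add: sym_entries[OF A sym])
    also have "\<dots> = (\<Sum>i=0..<n. a i * (\<Sum>j=0..<n. A$$(i,j) * b j))"
      by (simp add: sum_distrib_left mult.assoc)
    finally show ?thesis .
  qed
  have S1: "(\<Sum>i=0..<n. b i * (\<Sum>j=0..<n. A$$(i,j) * a j)) = x * (\<Sum>i=0..<n. a i * b i) - y * (\<Sum>i=0..<n. b i ^ 2)"
  proof -
    have "(\<Sum>i=0..<n. b i * (\<Sum>j=0..<n. A$$(i,j) * a j)) = (\<Sum>i=0..<n. x * (a i * b i) - y * b i ^ 2)"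
      by (rule sum.cong[OF refl], subst ra, auto simp: algebra_simps power2_eq_square)
    thus ?thesis by (simp add: sum_subtractf sum_distrib_left)
  qed
  have S2: "(\<Sum>i=0..<n. a i * (\<Sum>j=0..<n. A$$(i,j) * b j)) = x * (\<Sum>i=0..<n. a i * b i) + y * (\<Sum>i=0..<n. a i ^ 2)"
  proof -
    have "(\<Sum>i=0..<n. a i * (\<Sum>j=0..<n. A$$(i,j) * b j)) = (\<Sum>i=0..<n. x * (a i * b i) + y * a i ^ 2)"
      by (rule sum.cong[OF refl], subst rb, auto simp: algebra_simps power2_eq_square)
    thus ?thesis by (simp add: sum.distrib sum_distrib_left)
  qed
  have y0: "y * ((\<Sum>i=0..<n. a i ^ 2) + (\<Sum>i=0..<n. b i ^ 2)) = 0"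
    using S S1 S2 by (simp add: algebra_simps)
  obtain i where i: "i < n" "v $ i \<noteq> 0" using v by (metis eq_vecI carrier_vecD index_zero_vec)
  hence "a i \<noteq> 0 \<or> b i \<noteq> 0" by (simp add: a_def b_def complex_eq_iff)
  have "(\<Sum>i=0..<n. a i ^ 2) + (\<Sum>i=0..<n. b i ^ 2) > 0"
  proof -
    have "(\<Sum>i=0..<n. a i ^ 2) + (\<Sum>i=0..<n. b i ^ 2) = (\<Sum>i=0..<n. a i ^ 2 + b i ^ 2)"
      by (simp add: sum.distrib)
    also have "\<dots> > 0"
      by (rule sum_pos2[of _ i], use i \<open>a i \<noteq> 0 \<or> b i \<noteq> 0\<close> in \<open>auto simp: sum_power2_gt_zero_iff\<close>)
    finally show ?thesis .
  qed
  with y0 have y: "y = 0" by simp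
  show ?thesis
  proof (cases "\<exists>i<n. a i \<noteq> 0")
    case True
    show ?thesis
    proof (intro exI conjI)
      show "vec n a \<in> carrier_vec n" by simp
      show "vec n a \<noteq> 0\<^sub>v n" using True by (metis index_vec index_zero_vec(1))
      show "A *\<^sub>v vec n a = x \<cdot>\<^sub>v vec n a"
        by (rule eq_vecI, use A ra y in \<open>auto simp: scalar_prod_def\<close>)
    qed
  next
    case False
    with i \<open>a i \<noteq> 0 \<or> b i \<noteq> 0\<close> have bi: "b i \<noteq> 0" by auto
    show ?thesis
    proof (intro exI conjI)
      show "vec n b \<in> carrier_vec n" by simp
      show "vec n b \<noteq> 0\<^sub>v n" using bi i by (metis index_vec index_zero_vec(1))
      show "A *\<^sub>v vec n b = x \<cdot>\<^sub>v vec n b"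
        by (rule eq_vecI, use A rb y False in \<open>auto simp: scalar_prod_def\<close>)
    qed
  qed
qed


lemma if01_mult: "(if P then 1 else 0) * (x::real) = (if P then x else 0)"
  "x * (if P then 1 else 0) = (if P then x else 0)" by auto

lemma sum_delta_left: assumes "i < (n::nat)" shows "(\<Sum>l=0..<n. (if i = l then 1 else 0) * (f l::real)) = f i"
proof -
  have "(\<Sum>l=0..<n. (if i = l then 1 else 0) * f l) = (\<Sum>l=0..<n. if i = l then f l else 0)"
    by (rule sum.cong) auto
  also have "\<dots> = f i" using assms by (subst sum.delta') auto
  finally show ?thesis .
qed

lemma householder:
  fixes u :: "real vec"
  assumes u: "u \<in> carrier_vec n" "u \<bullet> u = 1" and n: "0 < n"
  shows "\<exists>H. H \<in> carrier_mat n n \<and> transpose_mat H = H \<and> H * H = 1\<^sub>m n \<and> H *\<^sub>v unit_vec n 0 = u"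
proof -
  define w where "w l = u$l - (if l = 0 then 1 else 0)" for l
  define ww where "ww = (\<Sum>l=0..<n. w l * w l)"
  define c where "c = (if ww = 0 then 0 else 2 / ww)"
  define H where "H = mat n n (\<lambda>(i,j). (if i = j then 1 else 0) - c * w i * w j)"
  have H: "H \<in> carrier_mat n n" by (simp add: H_def)
  have Hij: "H $$ (i,j) = (if i = j then 1 else 0) - c * w i * w j" if "i < n" "j < n" for i j
    using that by (simp add: H_def)
  have cww: "c * c * ww = 2 * c" by (simp add: c_def)
  have uu: "(\<Sum>l=0..<n. u$l * u$l) = 1" using u by (simp add: scalar_prod_def)
  have ww_eq: "ww = - 2 * w 0"
  proof -
    have "ww = (\<Sum>l=0..<n. u$l * u$l - 2 * (if l = 0 then u$l else 0) + (if l = 0 then 1 else 0))"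
      unfolding ww_def w_def by (intro sum.cong refl, auto simp: algebra_simps)
    also have "\<dots> = (\<Sum>l=0..<n. u$l * u$l) - 2 * (\<Sum>l=0..<n. if l = 0 then u$l else 0) + (\<Sum>l=0..<n. if l = 0 then 1 else 0)"
      by (simp add: sum.distrib sum_subtractf flip: sum_distrib_left)
    also have "\<dots> = 1 - 2 * u$0 + 1" using n by (simp add: uu flip: sum_distrib_left)
    finally show ?thesis using w_def by simp
  qed
  show ?thesis
  proof (intro exI conjI)
    show "H \<in> carrier_mat n n" by fact
    show "transpose_mat H = H" by (rule eq_matI, auto simp: H_def)
    show "H * H = 1\<^sub>m n"
    proof (rule eq_matI)
      fix i j assume i: "i < dim_row (1\<^sub>m n)" and j: "j < dim_col (1\<^sub>m n)"
      hence i: "i < n" and j: "j < n" by auto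
      have "(H * H) $$ (i,j) = (\<Sum>l=0..<n. H $$ (i,l) * H $$ (l,j))"
        using H i j by (simp add: scalar_prod_def)
      also have "\<dots> = (\<Sum>l=0..<n. (if i = l then 1 else 0) * ((if l = j then 1 else 0) - c * w l * w j)
            - (c * w i) * (w l * (if l = j then 1 else 0)) + (c * c * w i * w j) * (w l * w l))"
        using i j by (intro sum.cong refl, auto simp: Hij algebra_simps)
      also have "\<dots> = (\<Sum>l=0..<n. (if i = l then 1 else 0) * ((if l = j then 1 else 0) - c * w l * w j))
            - (c * w i) * (\<Sum>l=0..<n. w l * (if l = j then 1 else 0)) + (c * c * w i * w j) * ww"
        by (simp add: sum.distrib sum_subtractf sum_distrib_left ww_def)
      also have "(\<Sum>l=0..<n. (if i = l then 1 else 0) * ((if l = j then 1 else 0) - c * w l * w j))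
          = (if i = j then 1 else 0) - c * w i * w j" using i by (rule sum_delta_left)
      also have "(\<Sum>l=0..<n. w l * (if l = j then 1 else 0)) = w j"
        using j by (simp add: if01_mult)
      also have "(c * c * w i * w j) * ww = 2 * c * w i * w j"
      proof -
        have "(c * c * w i * w j) * ww = (c * c * ww) * (w i * w j)" by (simp add: algebra_simps)
        thus ?thesis using cww by simp
      qed
      also have "(if i = j then 1 else 0) - c * w i * w j - c * w i * w j + 2 * c * w i * w j = (if i = j then 1 else (0::real))"
        by simp
      finally show "(H * H) $$ (i,j) = 1\<^sub>m n $$ (i,j)" using i j by simp
    qed (use H in auto)
    show "H *\<^sub>v unit_vec n 0 = u"
    proof (rule eq_vecI)
      fix i assume "i < dim_vec u"
      hence i: "i < n" using u by simp
      have "(H *\<^sub>v unit_vec n 0) $ i = H $$ (i,0)" using H i n by simp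
      also have "\<dots> = u $ i"
      proof (cases "ww = 0")
        case True
        hence "w i * w i = 0"
          using i unfolding ww_def
          by (subst (asm) sum_nonneg_eq_0_iff, auto)
        thus ?thesis using i n True by (simp add: Hij c_def w_def)
      next
        case False
        have "c * w 0 = -1" using False ww_eq by (simp add: c_def field_simps)
        hence "c * w i * w 0 = - w i" by (metis mult.assoc mult.commute mult_minus1_right)
        thus ?thesis using i n by (simp add: Hij w_def)
      qed
      finally show "(H *\<^sub>v unit_vec n 0) $ i = u $ i" .
    qed (use H u in auto)
  qed
qed


lemma spectral:
  fixes A :: "real mat"
  assumes "A \<in> carrier_mat n n" "transpose_mat A = A"
  shows "\<exists>U D. U \<in> carrier_mat n n \<and> D \<in> carrier_mat n n \<and> diagonal_mat D \<and>
     transpose_mat U * U = 1\<^sub>m n \<and> A = U * D * transpose_mat U"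
  using assms
proof (induction n arbitrary: A)
  case 0
  show ?case
    by (rule exI[of _ "1\<^sub>m 0"], rule exI[of _ A], use 0 in \<open>auto intro!: eq_matI simp: diagonal_mat_def\<close>)
next
  case (Suc m A)
  let ?n = "Suc m"
  have A: "A \<in> carrier_mat ?n ?n" and symA: "transpose_mat A = A" using Suc.prems by auto
  obtain l v where v: "v \<in> carrier_vec ?n" "v \<noteq> 0\<^sub>v ?n" "A *\<^sub>v v = l \<cdot>\<^sub>v v"
    using real_sym_eigen[OF A symA] by auto
  have vv: "v \<bullet> v > 0"
  proof -
    obtain i where i: "i < ?n" "v $ i \<noteq> 0" using v by (metis eq_vecI carrier_vecD index_zero_vec)
    have "v \<bullet> v = (\<Sum>j=0..<?n. v$j * v$j)" using v by (simp add: scalar_prod_def)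
    also have "\<dots> > 0" by (rule sum_pos2[of _ i], use i in \<open>auto simp: zero_less_mult_iff\<close>)
    finally show ?thesis .
  qed
  define u where "u = (1 / sqrt (v \<bullet> v)) \<cdot>\<^sub>v v"
  have u: "u \<in> carrier_vec ?n" using v by (simp add: u_def)
  have uu: "u \<bullet> u = 1"
  proof -
    have "u \<bullet> u = (1 / sqrt (v \<bullet> v)) * ((1 / sqrt (v \<bullet> v)) * (v \<bullet> v))" using v by (simp add: u_def)
    also have "\<dots> = 1" using vv by (simp add: field_simps)
    finally show ?thesis .
  qed
  have Au: "A *\<^sub>v u = l \<cdot>\<^sub>v u"
    using v A unfolding u_def by (simp add: mult_mat_vec smult_smult_assoc mult.commute)
  obtain H where H: "H \<in> carrier_mat ?n ?n" "transpose_mat H = H" "H * H = 1\<^sub>m ?n" "H *\<^sub>v unit_vec ?n 0 = u"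
    using householder[OF u uu] by auto
  have HHX: "H * (H * X) = X" if "X \<in> carrier_mat ?n nc" for X nc
  proof -
    have "H * (H * X) = (H * H) * X" by (rule assoc_mult_mat[symmetric]) (use H that in auto)
    thus ?thesis using H that by simp
  qed
  define B where "B = H * A * H"
  have B: "B \<in> carrier_mat ?n ?n" using H A by (simp add: B_def)
  have symB: "transpose_mat B = B"
  proof -
    have BB: "B = H * (A * H)" unfolding B_def using H A by simp
    have t1: "transpose_mat (H * (A * H)) = transpose_mat (A*H) * transpose_mat H"
      by (rule transpose_mult[of H ?n ?n "A*H" ?n]) (use H A in auto)
    have t2: "transpose_mat (A*H) = transpose_mat H * transpose_mat A"
      by (rule transpose_mult) (use H A in auto)
    show ?thesis unfolding BB t1 t2 using H A symA by simp
  qed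
  have Be0: "B *\<^sub>v unit_vec ?n 0 = l \<cdot>\<^sub>v unit_vec ?n 0"
  proof -
    have "B *\<^sub>v unit_vec ?n 0 = H *\<^sub>v (A *\<^sub>v (H *\<^sub>v unit_vec ?n 0))"
    proof -
      have "B = H * (A * H)" unfolding B_def using H A by simp
      also have "\<dots> *\<^sub>v unit_vec ?n 0 = H *\<^sub>v ((A * H) *\<^sub>v unit_vec ?n 0)"
        by (rule assoc_mult_mat_vec) (use H A in auto)
      also have "(A * H) *\<^sub>v unit_vec ?n 0 = A *\<^sub>v (H *\<^sub>v unit_vec ?n 0)"
        by (rule assoc_mult_mat_vec) (use H A in auto)
      finally show ?thesis .
    qed
    also have "\<dots> = H *\<^sub>v (l \<cdot>\<^sub>v u)" using H(4) Au by simp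
    also have "\<dots> = l \<cdot>\<^sub>v (H *\<^sub>v (H *\<^sub>v unit_vec ?n 0))" using H u by (simp add: mult_mat_vec)
    also have "\<dots> = l \<cdot>\<^sub>v unit_vec ?n 0"
    proof -
      have "H *\<^sub>v (H *\<^sub>v unit_vec ?n 0) = (H * H) *\<^sub>v unit_vec ?n 0"
        by (rule assoc_mult_mat_vec[symmetric]) (use H in auto)
      thus ?thesis using H(3) by simp
    qed
    finally show ?thesis .
  qed
  have Bi0: "B $$ (i, 0) = (if i = 0 then l else 0)" if i: "i < ?n" for i
  proof -
    have "(B *\<^sub>v unit_vec ?n 0) $ i = B $$ (i,0)" using B i by simp
    thus ?thesis using Be0 i by (cases "i = 0") (auto simp: if01_mult)
  qed
  have B0j: "B $$ (0, j) = (if j = 0 then l else 0)" if j: "j < ?n" for j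
    using Bi0[OF j] sym_entries[OF B symB, of 0 j] j by simp
  define A' where "A' = mat m m (\<lambda>(i,j). B $$ (Suc i, Suc j))"
  have A': "A' \<in> carrier_mat m m" by (simp add: A'_def)
  have symA': "transpose_mat A' = A'"
    by (rule eq_matI, auto simp: A'_def sym_entries[OF B symB])
  obtain U' D' where U'D': "U' \<in> carrier_mat m m" "D' \<in> carrier_mat m m" "diagonal_mat D'"
     "transpose_mat U' * U' = 1\<^sub>m m" "A' = U' * D' * transpose_mat U'"
    using Suc.IH[OF A' symA'] by auto
  define L where "L = mat 1 1 (\<lambda>_. l)"
  have L: "L \<in> carrier_mat 1 1" by (simp add: L_def)
  have Bblock: "B = four_block_mat L (0\<^sub>m 1 m) (0\<^sub>m m 1) A'"
  proof (rule eq_matI)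
    fix i j assume "i < dim_row (four_block_mat L (0\<^sub>m 1 m) (0\<^sub>m m 1) A')"
      "j < dim_col (four_block_mat L (0\<^sub>m 1 m) (0\<^sub>m m 1) A')"
    hence i: "i < ?n" and j: "j < ?n" using L A' by auto
    show "B $$ (i,j) = four_block_mat L (0\<^sub>m 1 m) (0\<^sub>m m 1) A' $$ (i,j)"
    proof (cases "i = 0 \<or> j = 0")
      case True
      thus ?thesis using i j L A' Bi0 B0j by (auto simp: L_def)
    next
      case False
      then obtain i' j' where "i = Suc i'" "j = Suc j'" by (metis not0_implies_Suc)
      thus ?thesis using i j L A' by (auto simp: A'_def)
    qed
  qed (use B L A' in auto)
  define Ut where "Ut = four_block_mat (1\<^sub>m 1) (0\<^sub>m 1 m) (0\<^sub>m m 1) U'"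
  define Dt where "Dt = four_block_mat L (0\<^sub>m 1 m) (0\<^sub>m m 1) D'"
  have Ut: "Ut \<in> carrier_mat ?n ?n"
    using four_block_carrier_mat[OF one_carrier_mat[of 1] U'D'(1)] by (simp add: Ut_def)
  have Dt: "Dt \<in> carrier_mat ?n ?n"
    using four_block_carrier_mat[OF L U'D'(2)] by (simp add: Dt_def)
  have UtT: "transpose_mat Ut = four_block_mat (1\<^sub>m 1) (0\<^sub>m 1 m) (0\<^sub>m m 1) (transpose_mat U')"
    unfolding Ut_def using U'D' by (subst transpose_four_block_mat, auto)
  have UtTUt: "transpose_mat Ut * Ut = 1\<^sub>m ?n"
    unfolding UtT unfolding Ut_def using U'D'
    by (subst mult_four_block_mat[of _ 1 1 _ m _ m _ _ 1 _ m], auto)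
  have BUt: "B = Ut * Dt * transpose_mat Ut"
  proof -
    have "Ut * Dt = four_block_mat L (0\<^sub>m 1 m) (0\<^sub>m m 1) (U' * D')"
      unfolding Ut_def Dt_def using U'D' L
      by (subst mult_four_block_mat[of _ 1 1 _ m _ m _ _ 1 _ m], auto)
    also have "\<dots> * transpose_mat Ut = four_block_mat L (0\<^sub>m 1 m) (0\<^sub>m m 1) (U' * D' * transpose_mat U')"
      unfolding UtT using U'D' L
      by (subst mult_four_block_mat[of _ 1 1 _ m _ m _ _ 1 _ m], auto)
    finally show ?thesis using Bblock U'D' by simp
  qed
  show ?case
  proof (intro exI conjI)
    show "H * Ut \<in> carrier_mat ?n ?n" using H Ut by simp
    show "Dt \<in> carrier_mat ?n ?n" by fact
    show "diagonal_mat Dt"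
      using U'D'(3) U'D' L unfolding diagonal_mat_def Dt_def by (auto simp: L_def)
    show "transpose_mat (H * Ut) * (H * Ut) = 1\<^sub>m ?n"
    proof -
      have "transpose_mat (H * Ut) * (H * Ut) = transpose_mat Ut * Ut"
        using H Ut HHX[OF Ut] by (simp add: transpose_mult[of _ ?n ?n] assoc_mult_mat[of _ ?n ?n _ ?n _ ?n])
      thus ?thesis using H Ut UtTUt HHX[OF Ut] by (simp add: assoc_mult_mat[of _ ?n ?n _ ?n _ ?n])
    qed
    show "A = H * Ut * Dt * transpose_mat (H * Ut)"
    proof -
      have "H * Ut * Dt * transpose_mat (H * Ut) = H * (Ut * Dt * transpose_mat Ut) * H"
        using H Ut Dt by (simp add: transpose_mult[of _ ?n ?n] assoc_mult_mat[of _ ?n ?n _ ?n _ ?n])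
      also have "\<dots> = H * B * H" using BUt by simp
      also have "\<dots> = (H * H) * A * (H * H)" using H A HHX[OF A] by (simp add: B_def assoc_mult_mat[of _ ?n ?n _ ?n _ ?n])
      also have "\<dots> = A" using H A by simp
      finally show ?thesis by simp
    qed
  qed
qed


lemma underdetermined:
  fixes a :: "nat \<Rightarrow> nat \<Rightarrow> real"
  assumes "finite E" "finite K" "card E < card K"
  shows "\<exists>c. (\<exists>j\<in>K. c j \<noteq> 0) \<and> (\<forall>i\<in>E. (\<Sum>j\<in>K. a i j * c j) = 0)"
  using assms
proof (induction E arbitrary: K a rule: finite_induct)
  case empty
  then obtain j where "j \<in> K" by (metis card.empty card_gt_0_iff equals0I)
  thus ?case by (intro exI[of _ "\<lambda>_. 1"]) auto
next
  case (insert e E K a)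
  have cE: "card E < card K" using insert by simp
  show ?case
  proof (cases "\<forall>j\<in>K. a e j = 0")
    case True
    obtain c where c: "\<exists>j\<in>K. c j \<noteq> 0" "\<forall>i\<in>E. (\<Sum>j\<in>K. a i j * c j) = 0"
      using insert.IH[OF insert.prems(1) cE] by blast
    show ?thesis using c True by (intro exI[of _ c]) auto
  next
    case False
    then obtain j0 where j0: "j0 \<in> K" "a e j0 \<noteq> 0" by auto
    define K' where "K' = K - {j0}"
    have fK': "finite K'" using insert.prems by (simp add: K'_def)
    have cK': "card E < card K'" using insert.prems insert.hyps j0 by (simp add: K'_def)
    define a' where "a' i j = a i j - a i j0 * a e j / a e j0" for i j
    obtain c' where c': "\<exists>j\<in>K'. c' j \<noteq> 0" "\<forall>i\<in>E. (\<Sum>j\<in>K'. a' i j * c' j) = 0"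
      using insert.IH[OF fK' cK', of a'] by blast
    define S where "S = (\<Sum>j\<in>K'. a e j * c' j)"
    define c where "c j = (if j = j0 then - S / a e j0 else c' j)" for j
    have split: "(\<Sum>j\<in>K. a i j * c j) = a i j0 * c j0 + (\<Sum>j\<in>K'. a i j * c' j)" for i
    proof -
      have "(\<Sum>j\<in>K. a i j * c j) = a i j0 * c j0 + (\<Sum>j\<in>K'. a i j * c j)"
        unfolding K'_def using j0 insert.prems by (simp add: sum.remove)
      also have "(\<Sum>j\<in>K'. a i j * c j) = (\<Sum>j\<in>K'. a i j * c' j)"
        by (rule sum.cong) (auto simp: c_def K'_def)
      finally show ?thesis .
    qed
    show ?thesis
    proof (intro exI[of _ c] conjI ballI)
      show "\<exists>j\<in>K. c j \<noteq> 0" using c' by (auto simp: c_def K'_def)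
    next
      fix i assume i: "i \<in> insert e E"
      show "(\<Sum>j\<in>K. a i j * c j) = 0"
      proof (cases "i = e")
        case True
        have "(\<Sum>j\<in>K. a i j * c j) = a e j0 * c j0 + S" unfolding split S_def using True by simp
        thus ?thesis using j0 by (simp add: c_def)
      next
        case False
        hence iE: "i \<in> E" using i by auto
        have "0 = (\<Sum>j\<in>K'. a' i j * c' j)" using c' iE by simp
        also have "\<dots> = (\<Sum>j\<in>K'. a i j * c' j) - (a i j0 / a e j0) * S"
          unfolding a'_def S_def by (simp add: sum_subtractf sum_distrib_left algebra_simps)
        finally have "(\<Sum>j\<in>K'. a i j * c' j) = (a i j0 / a e j0) * S" by simp
        thus ?thesis unfolding split by (simp add: c_def)
      qed
    qed
  qed
qed


lemma proots_linear_prod: "proots (\<Prod>a\<leftarrow>ds. [:- a, 1:]) = mset (ds :: real list)"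
proof (induction ds)
  case Nil thus ?case by simp
next
  case (Cons a ds)
  have nz: "(\<Prod>a\<leftarrow>ds. [:- a, 1:]) \<noteq> (0::real poly)"
  proof -
    have "\<forall>a. [:-a, 1:] \<noteq> (0::real poly)" by simp
    have "0 \<notin> (\<lambda>a. [:- a, 1:]) ` set ds"
    proof
      assume "(0::real poly) \<in> (\<lambda>a. [:- a, 1:]) ` set ds"
      then obtain b where "(0::real poly) = [:- b, 1:]" by blast
      thus False using \<open>\<forall>a. [:-a, 1:] \<noteq> (0::real poly)\<close> by metis
    qed
    thus ?thesis by (subst prod_list_zero_iff) auto
  qed
  have "proots (\<Prod>a\<leftarrow>a#ds. [:- a, 1:]) = proots [:- a, 1:] + proots (\<Prod>a\<leftarrow>ds. [:- a, 1:])"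
  proof -
    have e: "(\<Prod>a\<leftarrow>a#ds. [:- a, 1:]) = [:- a, 1:] * (\<Prod>a\<leftarrow>ds. [:- a, 1:])" by simp
    show ?thesis by (subst e, rule proots_mult) (simp, rule nz)
  qed
  also have "proots [:- a, 1:] = {#a#}" using proots_linear_factor[of "-a"] by simp
  finally show ?case using Cons by simp
qed

lemma sorted_count:
  fixes s :: "real list"
  assumes "sorted s" "1 \<le> k" "k \<le> length s"
  shows "card {i. i < length s \<and> s!i < s!(k-1)} < k"
proof -
  have "{i. i < length s \<and> s!i < s!(k-1)} \<subseteq> {..<k-1}"
  proof
    fix i assume i: "i \<in> {i. i < length s \<and> s!i < s!(k-1)}"
    show "i \<in> {..<k-1}"
    proof (rule ccontr)
      assume "i \<notin> {..<k-1}"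
      hence "k - 1 \<le> i" by auto
      hence "s!(k-1) \<le> s!i" using sorted_nth_mono[OF assms(1)] i by auto
      thus False using i by auto
    qed
  qed
  hence "card {i. i < length s \<and> s!i < s!(k-1)} \<le> k - 1"
    by (metis card_lessThan card_mono finite_lessThan)
  thus ?thesis using assms by linarith
qed

lemma quad_expand:
  fixes f :: "nat \<Rightarrow> nat \<Rightarrow> real"
  assumes "finite P" "finite I"
  shows "(\<Sum>p\<in>P. \<Sum>q\<in>P. (\<Sum>i\<in>I. f p i * g i * f q i) * y p * y q)
       = (\<Sum>i\<in>I. g i * (\<Sum>p\<in>P. f p i * y p)^2)"
proof -
  have "(\<Sum>i\<in>I. g i * (\<Sum>p\<in>P. f p i * y p)^2) = (\<Sum>i\<in>I. \<Sum>p\<in>P. \<Sum>q\<in>P. f p i * g i * f q i * y p * y q)"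
    by (simp add: power2_eq_square sum_product sum_distrib_left mult_ac)
  also have "\<dots> = (\<Sum>p\<in>P. \<Sum>i\<in>I. \<Sum>q\<in>P. f p i * g i * f q i * y p * y q)"
    by (rule sum.swap)
  also have "\<dots> = (\<Sum>p\<in>P. \<Sum>q\<in>P. \<Sum>i\<in>I. f p i * g i * f q i * y p * y q)"
    by (rule sum.cong[OF refl], rule sum.swap)
  also have "\<dots> = (\<Sum>p\<in>P. \<Sum>q\<in>P. (\<Sum>i\<in>I. f p i * g i * f q i) * y p * y q)"
    by (simp add: sum_distrib_right)
  finally show ?thesis by simp
qed

lemma minmax:
  fixes A :: "real mat" and x :: "nat \<Rightarrow> nat \<Rightarrow> real"
  assumes A: "A \<in> carrier_mat n n" and sym: "transpose_mat A = A" and k: "1 \<le> k" "k \<le> n"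
  shows "\<exists>c. (\<exists>j<k. c j \<noteq> 0) \<and>
     sorted_list_of_multiset (proots (char_poly A)) ! (k-1) * (\<Sum>p=0..<n. (\<Sum>j<k. c j * x j p)^2)
     \<le> (\<Sum>p=0..<n. \<Sum>q=0..<n. A$$(p,q) * (\<Sum>j<k. c j * x j p) * (\<Sum>j<k. c j * x j q))"
proof -
  obtain U D where UD: "U \<in> carrier_mat n n" "D \<in> carrier_mat n n" "diagonal_mat D"
     "transpose_mat U * U = 1\<^sub>m n" "A = U * D * transpose_mat U"
    using spectral[OF A sym] by auto
  have UUT: "U * transpose_mat U = 1\<^sub>m n"
    by (rule mat_mult_left_right_inverse[OF transpose_carrier_mat[THEN iffD2, OF UD(1)] UD(1) UD(4)])
  have "similar_mat A D"
    unfolding similar_mat_def similar_mat_wit_def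
    by (rule exI[of _ U], rule exI[of _ "transpose_mat U"], use A UD UUT in \<open>auto simp: Let_def\<close>)
  hence "char_poly A = char_poly D" by (rule char_poly_similar)
  also have "\<dots> = (\<Prod>a\<leftarrow>diag_mat D. [:- a, 1:])"
  proof (rule char_poly_upper_triangular[OF UD(2)])
    show "upper_triangular D" unfolding upper_triangular_def
    proof (intro allI impI)
      fix i j assume "i < dim_row D" "j < i"
      thus "D $$ (i,j) = 0" using UD(2,3) unfolding diagonal_mat_def by auto
    qed
  qed
  finally have cp: "char_poly A = (\<Prod>a\<leftarrow>diag_mat D. [:- a, 1:])" .
  define d where "d i = D $$ (i,i)" for i
  have diag: "diag_mat D = map d [0..<n]" using UD(2) by (simp add: diag_mat_def d_def)
  define s where "s = sort (map d [0..<n])"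
  have es: "sorted_list_of_multiset (proots (char_poly A)) = s"
    unfolding cp proots_linear_prod diag s_def by (rule sorted_list_of_multiset_mset)
  define mu where "mu = s ! (k-1)"
  define J where "J = {i \<in> {0..<n}. d i < mu}"
  have cardJ: "card J < k"
  proof -
    have "card J = length (filter (\<lambda>v. v < mu) (map d [0..<n]))"
      unfolding J_def length_filter_conv_card by (intro arg_cong[where f=card]) auto
    also have "\<dots> = length (filter (\<lambda>v. v < mu) s)"
    proof -
      have "mset (filter (\<lambda>v. v < mu) s) = mset (filter (\<lambda>v. v < mu) (map d [0..<n]))"
        unfolding s_def by simp
      thus ?thesis by (metis size_mset)
    qed
    also have "\<dots> = card {i. i < length s \<and> s!i < s!(k-1)}"
      unfolding length_filter_conv_card mu_def ..
    also have "\<dots> < k" using sorted_count[of s k] k by (simp add: s_def)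
    finally show ?thesis .
  qed
  define a where "a i j = (\<Sum>p=0..<n. U$$(p,i) * x j p)" for i j
  obtain c where c: "\<exists>j\<in>{..<k}. c j \<noteq> 0" "\<forall>i\<in>J. (\<Sum>j\<in>{..<k}. a i j * c j) = 0"
    using underdetermined[of J "{..<k}" a] cardJ by (auto simp: J_def)
  define y where "y p = (\<Sum>j<k. c j * x j p)" for p
  define z where "z i = (\<Sum>p=0..<n. U$$(p,i) * y p)" for i
  have zJ: "z i = 0" if "i \<in> J" for i
  proof -
    have "z i = (\<Sum>p=0..<n. \<Sum>j<k. U$$(p,i) * (c j * x j p))"
      unfolding z_def y_def by (simp add: sum_distrib_left)
    also have "\<dots> = (\<Sum>j<k. \<Sum>p=0..<n. U$$(p,i) * (c j * x j p))" by (rule sum.swap)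
    also have "\<dots> = (\<Sum>j<k. a i j * c j)"
      unfolding a_def by (simp add: sum_distrib_left mult_ac)
    also have "\<dots> = 0" using c that by simp
    finally show ?thesis .
  qed
  have Aent: "A$$(p,q) = (\<Sum>i=0..<n. U$$(p,i) * d i * U$$(q,i))" if "p < n" "q < n" for p q
  proof -
    have UDent: "(U * D) $$ (p,l) = U$$(p,l) * d l" if "l < n" for l
    proof -
      have "(U * D) $$ (p,l) = (\<Sum>i=0..<n. U$$(p,i) * D$$(i,l))"
        using UD \<open>p < n\<close> that by (simp add: scalar_prod_def)
      also have "\<dots> = (\<Sum>i=0..<n. if i = l then U$$(p,i) * d l else 0)"
        using UD(2,3) that by (intro sum.cong refl) (auto simp: diagonal_mat_def d_def)
      also have "\<dots> = U$$(p,l) * d l" using that by simp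
      finally show ?thesis .
    qed
    have "A$$(p,q) = (\<Sum>l=0..<n. (U * D) $$ (p,l) * transpose_mat U $$ (l,q))"
      using UD that by (simp add: scalar_prod_def del: assoc_mult_mat)
    also have "\<dots> = (\<Sum>i=0..<n. U$$(p,i) * d i * U$$(q,i))"
      using UD that UDent by (intro sum.cong refl) auto
    finally show ?thesis .
  qed
  have Uorth: "(\<Sum>i=0..<n. U$$(p,i) * 1 * U$$(q,i)) = (if p = q then 1 else 0)" if "p < n" "q < n" for p q
  proof -
    have "(U * transpose_mat U) $$ (p,q) = (\<Sum>i=0..<n. U$$(p,i) * U$$(q,i))"
      using UD that by (simp add: scalar_prod_def)
    thus ?thesis using UUT that by simp
  qed
  have qf: "(\<Sum>p=0..<n. \<Sum>q=0..<n. A$$(p,q) * y p * y q) = (\<Sum>i=0..<n. d i * z i ^ 2)"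
  proof -
    have "(\<Sum>p=0..<n. \<Sum>q=0..<n. A$$(p,q) * y p * y q)
        = (\<Sum>p=0..<n. \<Sum>q=0..<n. (\<Sum>i=0..<n. U$$(p,i) * d i * U$$(q,i)) * y p * y q)"
      by (intro sum.cong refl) (simp add: Aent)
    also have "\<dots> = (\<Sum>i=0..<n. d i * z i ^ 2)"
      unfolding z_def by (rule quad_expand[of "{0..<n}" "{0..<n}" "\<lambda>p i. U$$(p,i)" d y]) auto
    finally show ?thesis .
  qed
  have nm: "(\<Sum>p=0..<n. y p ^ 2) = (\<Sum>i=0..<n. 1 * z i ^ 2)"
  proof -
    have "(\<Sum>p=0..<n. y p ^ 2) = (\<Sum>p=0..<n. \<Sum>q=0..<n. (if p = q then 1 else 0) * y p * y q)"
    proof (rule sum.cong[OF refl])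
      fix p assume p: "p \<in> {0..<n}"
      have "(\<Sum>q=0..<n. (if p = q then 1 else 0) * y p * y q) = (\<Sum>q=0..<n. (if p = q then 1 else 0) * (y p * y q))"
        by (simp add: mult.assoc)
      also have "\<dots> = y p * y p" using p by (subst sum_delta_left) auto
      finally show "y p ^ 2 = (\<Sum>q=0..<n. (if p = q then 1 else 0) * y p * y q)" by (simp add: power2_eq_square)
    qed
    also have "\<dots> = (\<Sum>p=0..<n. \<Sum>q=0..<n. (\<Sum>i=0..<n. U$$(p,i) * 1 * U$$(q,i)) * y p * y q)"
      by (intro sum.cong refl) (use Uorth in simp)
    also have "\<dots> = (\<Sum>i=0..<n. 1 * z i ^ 2)"
      unfolding z_def by (rule quad_expand[of "{0..<n}" "{0..<n}" "\<lambda>p i. U$$(p,i)" "\<lambda>_. 1" y]) auto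
    finally show ?thesis .
  qed
  have "mu * (\<Sum>p=0..<n. y p ^ 2) \<le> (\<Sum>i=0..<n. d i * z i ^ 2)"
  proof -
    have "mu * (\<Sum>p=0..<n. y p ^ 2) = (\<Sum>i=0..<n. mu * z i ^ 2)"
      unfolding nm by (simp add: sum_distrib_left)
    also have "\<dots> \<le> (\<Sum>i=0..<n. d i * z i ^ 2)"
    proof (rule sum_mono)
      fix i assume i: "i \<in> {0..<n}"
      show "mu * z i ^ 2 \<le> d i * z i ^ 2"
      proof (cases "i \<in> J")
        case True thus ?thesis using zJ by simp
      next
        case False
        hence "mu \<le> d i" using i by (auto simp: J_def)
        thus ?thesis by (simp add: mult_right_mono)
      qed
    qed
    finally show ?thesis .
  qed
  hence "mu * (\<Sum>p=0..<n. y p ^ 2) \<le> (\<Sum>p=0..<n. \<Sum>q=0..<n. A$$(p,q) * y p * y q)"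
    using qf by simp
  thus ?thesis using c(1) unfolding es mu_def y_def by auto
qed


lemma sum_single:
  assumes "finite K" "j \<in> K" "\<forall>i\<in>K. i \<noteq> j \<longrightarrow> f i = 0"
  shows "sum f K = (f j :: real)"
proof -
  have "sum f K = f j + sum f (K - {j})" using assms by (simp add: sum.remove)
  also have "sum f (K - {j}) = 0" using assms by (intro sum.neutral) auto
  finally show ?thesis by simp
qed

lemma sq_diff_le: "((x::real) - y)^2 \<le> 2 * (x^2 + y^2)"
proof -
  have "(x-y)^2 + (x+y)^2 = 2*(x^2+y^2)" by (simp add: power2_eq_square algebra_simps)
  moreover have "0 \<le> (x+y)^2" by simp
  ultimately show ?thesis by linarith
qed

lemma disj_point:
  fixes a c :: "nat \<Rightarrow> real"
  assumes K: "finite K" and d: "\<forall>j\<in>K. \<forall>j'\<in>K. j \<noteq> j' \<longrightarrow> a j = 0 \<or> a j' = 0"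
  shows "(\<Sum>j\<in>K. c j * a j)^2 = (\<Sum>j\<in>K. c j^2 * a j^2)"
proof (cases "\<exists>j\<in>K. a j \<noteq> 0")
  case True
  then obtain j where j: "j \<in> K" "a j \<noteq> 0" by auto
  have z: "\<forall>i\<in>K. i \<noteq> j \<longrightarrow> a i = 0" using d j by metis
  have "(\<Sum>j\<in>K. c j * a j) = c j * a j" by (rule sum_single[OF K j(1)]) (use z in auto)
  moreover have "(\<Sum>j\<in>K. c j^2 * a j^2) = c j^2 * a j^2" by (rule sum_single[OF K j(1)]) (use z in auto)
  ultimately show ?thesis by (simp add: power_mult_distrib)
next
  case False thus ?thesis by simp
qed

lemma disj_pair:
  fixes a b c :: "nat \<Rightarrow> real"
  assumes K: "finite K" and da: "\<forall>j\<in>K. \<forall>j'\<in>K. j \<noteq> j' \<longrightarrow> a j = 0 \<or> a j' = 0"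
    and db: "\<forall>j\<in>K. \<forall>j'\<in>K. j \<noteq> j' \<longrightarrow> b j = 0 \<or> b j' = 0"
  shows "((\<Sum>j\<in>K. c j * a j) - (\<Sum>j\<in>K. c j * b j))^2 \<le> 2 * (\<Sum>j\<in>K. c j^2 * (a j - b j)^2)"
proof -
  have nn: "0 \<le> (\<Sum>j\<in>K. c j^2 * (a j - b j)^2)" by (intro sum_nonneg) auto
  show ?thesis
  proof (cases "\<exists>j\<in>K. a j \<noteq> 0")
    case False
    hence "((\<Sum>j\<in>K. c j * a j) - (\<Sum>j\<in>K. c j * b j))^2 = (\<Sum>j\<in>K. c j * b j)^2" by simp
    also have "\<dots> = (\<Sum>j\<in>K. c j^2 * b j^2)" by (rule disj_point[OF K db])
    also have "\<dots> = (\<Sum>j\<in>K. c j^2 * (a j - b j)^2)" using False by (intro sum.cong refl) auto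
    finally show ?thesis using nn by linarith
  next
    case True
    then obtain j1 where j1: "j1 \<in> K" "a j1 \<noteq> 0" by auto
    have za: "\<forall>i\<in>K. i \<noteq> j1 \<longrightarrow> a i = 0" using da j1 by metis
    have sa: "(\<Sum>j\<in>K. c j * a j) = c j1 * a j1" by (rule sum_single[OF K j1(1)]) (use za in auto)
    show ?thesis
    proof (cases "\<exists>j\<in>K. b j \<noteq> 0")
      case False
      hence "((\<Sum>j\<in>K. c j * a j) - (\<Sum>j\<in>K. c j * b j))^2 = (\<Sum>j\<in>K. c j * a j)^2" by simp
      also have "\<dots> = (\<Sum>j\<in>K. c j^2 * a j^2)" by (rule disj_point[OF K da])
      also have "\<dots> = (\<Sum>j\<in>K. c j^2 * (a j - b j)^2)" using False by (intro sum.cong refl) auto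
      finally show ?thesis using nn by linarith
    next
      case True
      then obtain j2 where j2: "j2 \<in> K" "b j2 \<noteq> 0" by auto
      have zb: "\<forall>i\<in>K. i \<noteq> j2 \<longrightarrow> b i = 0" using db j2 by metis
      have sb: "(\<Sum>j\<in>K. c j * b j) = c j2 * b j2" by (rule sum_single[OF K j2(1)]) (use zb in auto)
      show ?thesis
      proof (cases "j1 = j2")
        case True
        have "(\<Sum>j\<in>K. c j^2 * (a j - b j)^2) \<ge> c j1^2 * (a j1 - b j1)^2"
          by (rule member_le_sum[OF j1(1)]) (auto simp: K)
        moreover have "((\<Sum>j\<in>K. c j * a j) - (\<Sum>j\<in>K. c j * b j))^2 = c j1^2 * (a j1 - b j1)^2"
          using sa sb True by (simp add: power_mult_distrib right_diff_distrib[symmetric])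
        moreover have "0 \<le> c j1^2 * (a j1 - b j1)^2" by simp
        ultimately show ?thesis by linarith
      next
        case False
        have le1: "(\<Sum>j\<in>{j1,j2}. c j^2 * (a j - b j)^2) \<le> (\<Sum>j\<in>K. c j^2 * (a j - b j)^2)"
          by (rule sum_mono2) (use K j1 j2 in auto)
        have eq1: "(\<Sum>j\<in>{j1,j2}. c j^2 * (a j - b j)^2) = c j1^2 * a j1^2 + c j2^2 * b j2^2"
          using False za zb j1 j2 by simp
        have "((\<Sum>j\<in>K. c j * a j) - (\<Sum>j\<in>K. c j * b j))^2 \<le> 2 * (c j1^2 * a j1^2 + c j2^2 * b j2^2)"
        proof -
          have "(c j1 * a j1 - c j2 * b j2)^2 \<le> 2 * ((c j1 * a j1)^2 + (c j2 * b j2)^2)"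
            by (rule sq_diff_le)
          thus ?thesis using sa sb by (simp add: power_mult_distrib)
        qed
        also have "\<dots> = 2 * (\<Sum>j\<in>{j1,j2}. c j^2 * (a j - b j)^2)" using eq1 by simp
        also have "\<dots> \<le> 2 * (\<Sum>j\<in>K. c j^2 * (a j - b j)^2)" using le1 by simp
        finally show ?thesis .
      qed
    qed
  qed
qed


definition En :: "nat \<Rightarrow> (nat \<Rightarrow> nat \<Rightarrow> real) \<Rightarrow> (nat \<Rightarrow> real) \<Rightarrow> real" where
  "En n w f = (\<Sum>u<n. \<Sum>v<n. w u v * (f u - f v)^2) / 2"

lemma En2: "2 * En n w f = (\<Sum>u<n. \<Sum>v<n. w u v * (f u - f v)^2)"
  unfolding En_def by simp

lemma rayleigh_En: "rayleigh n w f = En n w f / wnorm2 n w f"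
  unfolding rayleigh_def En_def ..

lemma En_expand:
  assumes sym: "\<forall>u<n. \<forall>v<n. w u v = w v u"
  shows "En n w f = (\<Sum>p<n. wdeg n w p * f p ^ 2) - (\<Sum>p<n. \<Sum>q<n. w p q * f p * f q)"
proof -
  have a: "(\<Sum>u<n. \<Sum>v<n. w u v * f u ^ 2) = (\<Sum>p<n. wdeg n w p * f p ^ 2)"
    unfolding wdeg_def by (simp add: sum_distrib_right)
  have b: "(\<Sum>u<n. \<Sum>v<n. w u v * f v ^ 2) = (\<Sum>p<n. wdeg n w p * f p ^ 2)"
  proof -
    have "(\<Sum>u<n. \<Sum>v<n. w u v * f v ^ 2) = (\<Sum>v<n. \<Sum>u<n. w u v * f v ^ 2)" by (rule sum.swap)
    also have "\<dots> = (\<Sum>v<n. \<Sum>u<n. w v u * f v ^ 2)" using sym by (intro sum.cong refl) auto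
    finally show ?thesis using a by simp
  qed
  have "(\<Sum>u<n. \<Sum>v<n. w u v * (f u - f v)^2)
      = (\<Sum>u<n. \<Sum>v<n. w u v * f u ^ 2) + (\<Sum>u<n. \<Sum>v<n. w u v * f v ^ 2) - 2 * (\<Sum>u<n. \<Sum>v<n. w u v * f u * f v)"
    by (simp add: power2_diff sum.distrib sum_subtractf sum_distrib_left algebra_simps)
  thus ?thesis unfolding En_def a b by simp
qed

lemma lap_quad:
  assumes sym: "\<forall>u<n. \<forall>v<n. w u v = w v u" and deg: "\<forall>v<n. wdeg n w v \<ge> 1"
  shows "(\<Sum>p=0..<n. \<Sum>q=0..<n. norm_laplacian n w $$ (p,q) * (sqrt (wdeg n w p) * f p) * (sqrt (wdeg n w q) * f q))
         = En n w f"
proof -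
  have t: "norm_laplacian n w $$ (p,q) * (sqrt (wdeg n w p) * f p) * (sqrt (wdeg n w q) * f q)
      = (if p = q then wdeg n w p * f p ^ 2 else 0) - w p q * f p * f q" if "p < n" "q < n" for p q
  proof -
    have dp: "wdeg n w p > 0" "wdeg n w q > 0" using deg that by force+
    have s: "sqrt (wdeg n w p) * sqrt (wdeg n w q) / sqrt (wdeg n w p * wdeg n w q) = 1"
      using dp by (simp add: real_sqrt_mult)
    have "norm_laplacian n w $$ (p,q) * (sqrt (wdeg n w p) * f p) * (sqrt (wdeg n w q) * f q)
       = ((if p = q then 1 else 0) - w p q / sqrt (wdeg n w p * wdeg n w q)) * (sqrt (wdeg n w p) * sqrt (wdeg n w q)) * (f p * f q)"
      using that by (simp add: norm_laplacian_def mult_ac)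
    also have "\<dots> = (if p = q then sqrt (wdeg n w p) * sqrt (wdeg n w q) else 0) * (f p * f q)
        - w p q * (sqrt (wdeg n w p) * sqrt (wdeg n w q) / sqrt (wdeg n w p * wdeg n w q)) * (f p * f q)"
      by (simp add: algebra_simps)
    also have "\<dots> = (if p = q then wdeg n w p * f p ^ 2 else 0) - w p q * f p * f q"
      using dp s by (auto simp: power2_eq_square)
    finally show ?thesis .
  qed
  have "(\<Sum>p=0..<n. \<Sum>q=0..<n. norm_laplacian n w $$ (p,q) * (sqrt (wdeg n w p) * f p) * (sqrt (wdeg n w q) * f q))
      = (\<Sum>p=0..<n. \<Sum>q=0..<n. (if p = q then wdeg n w p * f p ^ 2 else 0) - w p q * f p * f q)"
    by (intro sum.cong refl) (simp add: t)
  also have "\<dots> = (\<Sum>p<n. wdeg n w p * f p ^ 2) - (\<Sum>p<n. \<Sum>q<n. w p q * f p * f q)"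
    by (simp add: sum_subtractf atLeast0LessThan)
  also have "\<dots> = En n w f" using En_expand[OF sym] by simp
  finally show ?thesis .
qed

lemma wnorm2_sqrt:
  assumes deg: "\<forall>v<n. wdeg n w v \<ge> 1"
  shows "(\<Sum>p=0..<n. (sqrt (wdeg n w p) * f p)^2) = wnorm2 n w f"
  unfolding wnorm2_def atLeast0LessThan
  by (intro sum.cong refl) (use deg in \<open>auto simp: power_mult_distrib\<close>)

lemma lap_carrier: "norm_laplacian n w \<in> carrier_mat n n"
  by (simp add: norm_laplacian_def)

lemma lap_sym:
  assumes sym: "\<forall>u<n. \<forall>v<n. w u v = w v u"
  shows "transpose_mat (norm_laplacian n w) = norm_laplacian n w"
  by (rule eq_matI) (use sym in \<open>auto simp: norm_laplacian_def mult.commute\<close>)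

lemma no_k_disjoint:
  fixes phi :: "nat \<Rightarrow> nat \<Rightarrow> real"
  assumes w_nonneg: "\<forall>u<n. \<forall>v<n. w u v \<ge> 0"
    and w_sym: "\<forall>u<n. \<forall>v<n. w u v = w v u"
    and deg_ge1: "\<forall>v<n. wdeg n w v \<ge> 1"
    and k: "1 \<le> k" "k \<le> n"
    and nz: "\<forall>j<k. \<exists>v<n. phi j v \<noteq> 0"
    and disj: "\<forall>j<k. \<forall>j'<k. j \<noteq> j' \<longrightarrow> (\<forall>v<n. phi j v = 0 \<or> phi j' v = 0)"
    and small: "\<forall>j<k. 2 * En n w (phi j) < lap_eig n w k * wnorm2 n w (phi j)"
  shows False
proof -
  let ?L = "norm_laplacian n w"
  let ?d = "wdeg n w"
  define mu where "mu = lap_eig n w k"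
  obtain c where c: "\<exists>j<k. c j \<noteq> 0"
    and ineq: "mu * (\<Sum>p=0..<n. (\<Sum>j<k. c j * (sqrt (?d p) * phi j p))^2)
     \<le> (\<Sum>p=0..<n. \<Sum>q=0..<n. ?L$$(p,q) * (\<Sum>j<k. c j * (sqrt (?d p) * phi j p)) * (\<Sum>j<k. c j * (sqrt (?d q) * phi j q)))"
    using minmax[OF lap_carrier lap_sym[OF w_sym] k, of "\<lambda>j p. sqrt (?d p) * phi j p"]
    unfolding mu_def lap_eig_def by blast
  define psi where "psi p = (\<Sum>j<k. c j * phi j p)" for p
  have rw: "(\<Sum>j<k. c j * (sqrt (?d p) * phi j p)) = sqrt (?d p) * psi p" for p
    unfolding psi_def by (simp add: sum_distrib_left mult_ac)
  have ineq2: "mu * wnorm2 n w psi \<le> En n w psi"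
    using ineq unfolding rw wnorm2_sqrt[OF deg_ge1] lap_quad[OF w_sym deg_ge1] .
  have dK: "\<forall>j\<in>{..<k}. \<forall>j'\<in>{..<k}. j \<noteq> j' \<longrightarrow> phi j v = 0 \<or> phi j' v = 0" if "v < n" for v
    using disj that by auto
  have W: "wnorm2 n w psi = (\<Sum>j<k. c j^2 * wnorm2 n w (phi j))"
  proof -
    have "wnorm2 n w psi = (\<Sum>v<n. ?d v * (\<Sum>j<k. c j^2 * phi j v^2))"
      unfolding wnorm2_def psi_def
      by (intro sum.cong refl) (use disj_point[OF finite_lessThan dK] in auto)
    also have "\<dots> = (\<Sum>j<k. c j^2 * wnorm2 n w (phi j))"
      unfolding wnorm2_def by (simp add: sum_distrib_left sum.swap[of _ "{..<n}"] mult_ac)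
    finally show ?thesis .
  qed
  have E: "2 * En n w psi \<le> 2 * (\<Sum>j<k. c j^2 * (2 * En n w (phi j)))"
  proof -
    have "2 * En n w psi = (\<Sum>u<n. \<Sum>v<n. w u v * (psi u - psi v)^2)" unfolding En_def by simp
    also have "\<dots> \<le> (\<Sum>u<n. \<Sum>v<n. w u v * (2 * (\<Sum>j<k. c j^2 * (phi j u - phi j v)^2)))"
    proof (intro sum_mono mult_left_mono)
      fix u v assume u: "u \<in> {..<n}" and v: "v \<in> {..<n}"
      show "0 \<le> w u v" using w_nonneg u v by auto
      show "(psi u - psi v)^2 \<le> 2 * (\<Sum>j<k. c j^2 * (phi j u - phi j v)^2)"
        unfolding psi_def by (rule disj_pair[OF finite_lessThan dK dK]) (use u v in auto)
    qed
    also have "\<dots> = (\<Sum>u<n. \<Sum>v<n. \<Sum>j<k. 2 * (c j^2 * (w u v * (phi j u - phi j v)^2)))"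
      by (simp add: sum_distrib_left mult_ac)
    also have "\<dots> = (\<Sum>u<n. \<Sum>j<k. \<Sum>v<n. 2 * (c j^2 * (w u v * (phi j u - phi j v)^2)))"
      by (rule sum.cong[OF refl], rule sum.swap)
    also have "\<dots> = (\<Sum>j<k. \<Sum>u<n. \<Sum>v<n. 2 * (c j^2 * (w u v * (phi j u - phi j v)^2)))"
      by (rule sum.swap)
    also have "\<dots> = 2 * (\<Sum>j<k. c j^2 * (2 * En n w (phi j)))"
      unfolding En2 by (simp add: sum_distrib_left mult_ac)
    finally show ?thesis .
  qed
  have "(\<Sum>j<k. c j^2 * (2 * En n w (phi j))) < (\<Sum>j<k. c j^2 * (mu * wnorm2 n w (phi j)))"
  proof (rule sum_strict_mono_ex1)
    show "finite {..<k}" by simp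
    show "\<forall>j\<in>{..<k}. c j^2 * (2 * En n w (phi j)) \<le> c j^2 * (mu * wnorm2 n w (phi j))"
      using small unfolding mu_def by (intro ballI mult_left_mono) (auto simp: less_imp_le)
    show "\<exists>j\<in>{..<k}. c j^2 * (2 * En n w (phi j)) < c j^2 * (mu * wnorm2 n w (phi j))"
    proof -
      obtain j0 where j0: "j0 < k" "c j0 \<noteq> 0" using c by auto
      have "c j0^2 * (2 * En n w (phi j0)) < c j0^2 * (mu * wnorm2 n w (phi j0))"
        by (rule mult_strict_left_mono) (use small j0 in \<open>auto simp: mu_def\<close>)
      thus ?thesis using j0(1) lessThan_iff by blast
    qed
  qed
  also have "\<dots> = mu * wnorm2 n w psi" unfolding W by (simp add: sum_distrib_left mult_ac)
  finally show False using E ineq2 by linarith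
qed


definition tent :: "real \<Rightarrow> real \<Rightarrow> real \<Rightarrow> real" where
  "tent a b x = max 0 (min (x - a) (b - x))"

definition ov :: "real \<Rightarrow> real \<Rightarrow> real \<Rightarrow> real \<Rightarrow> real" where
  "ov a b x y = max 0 (min (max x y) b - max (min x y) a)"

lemma tent_nonneg: "0 \<le> tent a b x" by (simp add: tent_def)

lemma tent_pos: "tent a b x \<noteq> 0 \<Longrightarrow> a < x \<and> x < b"
  by (auto simp: tent_def max_def min_def split: if_splits)

lemma tent_lip: "a \<le> b \<Longrightarrow> \<bar>tent a b x - tent a b y\<bar> \<le> ov a b x y"
  unfolding tent_def ov_def by (auto simp: max_def min_def split: if_splits)

lemma ov_add: "a \<le> b \<Longrightarrow> b \<le> c \<Longrightarrow> ov a c x y = ov a b x y + ov b c x y"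
  unfolding ov_def by (auto simp: max_def min_def split: if_splits)

lemma ov_le: "ov a b x y \<le> \<bar>x - y\<bar>"
  unfolding ov_def by (auto simp: max_def min_def split: if_splits)

lemma ov_nonneg: "0 \<le> ov a b x y" by (simp add: ov_def)

lemma ov_sum:
  assumes "\<And>i. t i \<le> t (Suc i)"
  shows "(\<Sum>i<m. ov (t i) (t (Suc i)) x y) = ov (t 0) (t m) x y"
proof (induction m)
  case 0 thus ?case by (simp add: ov_def)
next
  case (Suc m)
  have "t 0 \<le> t m" using lift_Suc_mono_le[of t, OF assms] by simp
  thus ?case using Suc ov_add[of "t 0" "t m" "t (Suc m)" x y] assms by simp
qed

lemma sum_sq_le_sq_sum:
  fixes b :: "nat \<Rightarrow> real"
  assumes "\<And>i. i \<in> A \<Longrightarrow> 0 \<le> b i" "finite A"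
  shows "(\<Sum>i\<in>A. b i ^ 2) \<le> (\<Sum>i\<in>A. b i) ^ 2"
  using assms(2,1)
proof (induction A rule: finite_induct)
  case empty thus ?case by simp
next
  case (insert x F)
  have "0 \<le> sum b F" using insert by (intro sum_nonneg) auto
  moreover have "0 \<le> b x" using insert by auto
  ultimately have "0 \<le> 2 * b x * sum b F" by simp
  moreover have "(\<Sum>i\<in>F. b i ^ 2) \<le> (sum b F)^2" using insert by auto
  ultimately have "(\<Sum>i\<in>F. b i ^ 2) + b x ^ 2 \<le> (sum b F)^2 + b x ^ 2 + 2 * b x * sum b F"
    by linarith
  thus ?case using insert by (simp add: power2_sum algebra_simps)
qed

lemma tent_sum_sq:
  assumes mono: "\<And>i. t i \<le> t (Suc i)"
  shows "(\<Sum>i<m. (tent (t i) (t (Suc i)) x - tent (t i) (t (Suc i)) y)^2) \<le> (x - y)^2"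
proof -
  have "(\<Sum>i<m. (tent (t i) (t (Suc i)) x - tent (t i) (t (Suc i)) y)^2)
      = (\<Sum>i<m. \<bar>tent (t i) (t (Suc i)) x - tent (t i) (t (Suc i)) y\<bar>^2)" by simp
  also have "\<dots> \<le> (\<Sum>i<m. \<bar>tent (t i) (t (Suc i)) x - tent (t i) (t (Suc i)) y\<bar>)^2"
    by (rule sum_sq_le_sq_sum) auto
  also have "\<dots> \<le> (\<Sum>i<m. ov (t i) (t (Suc i)) x y)^2"
    by (rule power_mono[OF sum_mono[OF tent_lip[OF mono]]]) (auto intro: sum_nonneg)
  also have "\<dots> = (ov (t 0) (t m) x y)^2" using ov_sum[where t=t and m=m and x=x and y=y] mono by simp
  also have "\<dots> \<le> \<bar>x - y\<bar>^2" by (rule power_mono[OF ov_le ov_nonneg])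
  finally show ?thesis by simp
qed

lemma find_interval:
  fixes t :: "nat \<Rightarrow> real"
  assumes mono: "\<And>i. i < m \<Longrightarrow> t i \<le> t (Suc i)" and "t 0 \<le> x" "x \<le> t m" "0 < m"
  shows "\<exists>i<m. t i \<le> x \<and> x \<le> t (Suc i)"
  using assms
proof (induction m)
  case 0 thus ?case by simp
next
  case (Suc m)
  show ?case
  proof (cases "m > 0 \<and> x \<le> t m")
    case True
    then obtain i where "i < m" "t i \<le> x \<and> x \<le> t (Suc i)" using Suc by auto
    thus ?thesis by (intro exI[of _ i]) auto
  next
    case False
    have "t m \<le> x"
    proof (cases "m = 0")
      case True thus ?thesis using Suc by simp
    next
      case False2: False
      hence "\<not> x \<le> t m" using False by auto
      thus ?thesis by linarith
    qed
    thus ?thesis using Suc by (intro exI[of _ m]) auto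
  qed
qed


lemma step_error:
  fixes t g f :: "nat \<Rightarrow> real"
  assumes deg: "\<forall>v<n. wdeg n w v \<ge> 1"
    and t0: "t 0 = 0" and mono: "\<forall>i<2*k. t i \<le> t (Suc i)" and tM: "t (2*k) = M"
    and frange: "\<forall>v<n. 0 \<le> f v \<and> f v \<le> M" and k: "1 \<le> k"
    and g: "is_step_approx n k t f g"
  shows "wnorm2 n w (\<lambda>v. f v - g v) \<le> (\<Sum>i<2*k. \<Sum>v<n. wdeg n w v * tent (t i) (t (Suc i)) (f v)^2)"
proof -
  have pt: "(f v - g v)^2 \<le> (\<Sum>i<2*k. tent (t i) (t (Suc i)) (f v)^2)" if v: "v < n" for v
  proof -
    obtain i where i: "i < 2*k" "t i \<le> f v" "f v \<le> t (Suc i)"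
      using find_interval[of "2*k" t "f v"] mono t0 tM frange v k by auto
    have gall: "\<forall>i\<le>2*k. \<bar>f v - g v\<bar> \<le> \<bar>f v - t i\<bar>" using g v unfolding is_step_approx_def by blast
    have g1: "\<bar>f v - g v\<bar> \<le> \<bar>f v - t i\<bar>" by (rule gall[rule_format]) (use i in simp)
    have g2: "\<bar>f v - g v\<bar> \<le> \<bar>f v - t (Suc i)\<bar>" by (rule gall[rule_format]) (use i in simp)
    have "tent (t i) (t (Suc i)) (f v) = min (f v - t i) (t (Suc i) - f v)"
      using i unfolding tent_def by auto
    hence "\<bar>f v - g v\<bar> \<le> tent (t i) (t (Suc i)) (f v)" using g1 g2 i by auto
    hence "\<bar>f v - g v\<bar>^2 \<le> tent (t i) (t (Suc i)) (f v)^2" by (rule power_mono) simp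
    also have "\<dots> \<le> (\<Sum>i<2*k. tent (t i) (t (Suc i)) (f v)^2)"
      by (rule member_le_sum) (use i in auto)
    finally show ?thesis by simp
  qed
  have "wnorm2 n w (\<lambda>v. f v - g v) \<le> (\<Sum>v<n. wdeg n w v * (\<Sum>i<2*k. tent (t i) (t (Suc i)) (f v)^2))"
    unfolding wnorm2_def
  proof (rule sum_mono)
    fix v assume "v \<in> {..<n}"
    thus "wdeg n w v * (f v - g v)^2 \<le> wdeg n w v * (\<Sum>i<2*k. tent (t i) (t (Suc i)) (f v)^2)"
      using pt deg by (intro mult_left_mono) auto
  qed
  also have "\<dots> = (\<Sum>i<2*k. \<Sum>v<n. wdeg n w v * tent (t i) (t (Suc i)) (f v)^2)"
    by (simp add: sum_distrib_left sum.swap[of _ "{..<n}"])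
  finally show ?thesis .
qed

lemma zero_case:
  fixes n k :: nat and w :: "nat \<Rightarrow> nat \<Rightarrow> real" and f :: "nat \<Rightarrow> real"
  assumes w_nonneg: "\<forall>u<n. \<forall>v<n. w u v \<ge> 0"
    and w_sym: "\<forall>u<n. \<forall>v<n. w u v = w v u"
    and deg_ge1: "\<forall>v<n. wdeg n w v \<ge> 1"
    and k_ge1: "1 \<le> k" and k_le_n: "k \<le> n"
    and eig_pos: "lap_eig n w k > 0"
    and f_nonneg: "\<forall>v<n. f v \<ge> 0"
    and R0: "En n w f = 0"
  shows "\<exists>t :: nat \<Rightarrow> real. t 0 = 0 \<and> (\<forall>i<2*k. t i \<le> t (Suc i))
           \<and> t (2*k) = Max (f ` {..<n})
           \<and> (\<forall>g. is_step_approx n k t f g \<longrightarrow> wnorm2 n w (\<lambda>v. f v - g v) \<le> 0)"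
proof -
  have n: "0 < n" using k_ge1 k_le_n by simp
  have same: "f u = f v" if "u < n" "v < n" "w u v \<noteq> 0" for u v
  proof -
    have S0: "(\<Sum>u<n. \<Sum>v<n. w u v * (f u - f v)^2) = 0" using R0 unfolding En_def by simp
    have nn: "\<And>u. u\<in>{..<n} \<Longrightarrow> 0 \<le> (\<Sum>v<n. w u v * (f u - f v)^2)"
      using w_nonneg by (auto intro!: sum_nonneg)
    have "(\<Sum>v<n. w u v * (f u - f v)^2) = 0"
      using S0 sum_nonneg_eq_0_iff[OF finite_lessThan nn] that by auto
    hence "w u v * (f u - f v)^2 = 0"
      using sum_nonneg_eq_0_iff[where f="\<lambda>v. w u v * (f u - f v)^2" and A="{..<n}"] w_nonneg that by auto
    thus ?thesis using that by simp
  qed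
  define S where "S = f ` {..<n}"
  have fS: "finite S" by (simp add: S_def)
  have cardS: "card S < k"
  proof (rule ccontr)
    assume "\<not> card S < k"
    then obtain T where T: "T \<subseteq> S" "card T = k" "finite T"
      using obtain_subset_with_card_n[of k S] by auto
    obtain h where h: "bij_betw h {0..<k} T" using ex_bij_betw_nat_finite[OF T(3)] T(2) by auto
    define phi where "phi j v = (if f v = h j then 1 else (0::real))" for j v
    show False
    proof (rule no_k_disjoint[OF w_nonneg w_sym deg_ge1 k_ge1 k_le_n, of phi])
      show "\<forall>j<k. \<exists>v<n. phi j v \<noteq> 0"
      proof (intro allI impI)
        fix j assume "j < k"
        hence "h j \<in> S" using h T unfolding bij_betw_def by auto
        then obtain v where "v < n" "f v = h j" unfolding S_def by auto
        thus "\<exists>v<n. phi j v \<noteq> 0" by (auto simp: phi_def)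
      qed
      show "\<forall>j<k. \<forall>j'<k. j \<noteq> j' \<longrightarrow> (\<forall>v<n. phi j v = 0 \<or> phi j' v = 0)"
        using h unfolding bij_betw_def inj_on_def phi_def by auto
      show "\<forall>j<k. 2 * En n w (phi j) < lap_eig n w k * wnorm2 n w (phi j)"
      proof (intro allI impI)
        fix j assume j: "j < k"
        have "(\<Sum>u<n. \<Sum>v<n. w u v * (phi j u - phi j v)^2) = 0"
        proof (intro sum.neutral ballI)
          fix u v assume "u \<in> {..<n}" "v \<in> {..<n}"
          thus "w u v * (phi j u - phi j v)^2 = 0" using same[of u v] by (cases "w u v = 0") (auto simp: phi_def)
        qed
        hence E0: "En n w (phi j) = 0" unfolding En_def by simp
        have "h j \<in> S" using j h T unfolding bij_betw_def by auto
        then obtain v where v: "v < n" "f v = h j" unfolding S_def by auto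
        have "1 \<le> wdeg n w v * phi j v ^ 2" using v deg_ge1 by (simp add: phi_def)
        also have "\<dots> \<le> wnorm2 n w (phi j)"
          unfolding wnorm2_def by (rule member_le_sum) (use v deg_ge1 in \<open>auto intro!: mult_nonneg_nonneg\<close>)
        finally have "0 < wnorm2 n w (phi j)" by simp
        thus "2 * En n w (phi j) < lap_eig n w k * wnorm2 n w (phi j)" using E0 eig_pos by simp
      qed
    qed
  qed
  define Lst where "Lst = sorted_list_of_set (insert 0 S)"
  have setL: "set Lst = insert 0 S" unfolding Lst_def by (rule sorted_list_of_set(1)) (use fS in simp)
  have sortL: "sorted Lst" by (simp add: Lst_def)
  have lenL: "length Lst \<le> k"
  proof -
    have "length Lst = card (insert 0 S)" unfolding Lst_def by (rule length_sorted_list_of_set)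
    also have "\<dots> \<le> Suc (card S)" by (simp add: card_insert_if fS)
    finally show ?thesis using cardS by simp
  qed
  define M where "M = Max (f ` {..<n})"
  have SM: "x \<le> M" if "x \<in> S" for x using that fS unfolding M_def S_def by simp
  have M0: "0 \<le> M" using SM[of "f 0"] f_nonneg n by (auto simp: S_def)
  have LM: "Lst ! i \<le> M" if "i < length Lst" for i
  proof -
    have "Lst ! i \<in> insert 0 S" using that setL nth_mem by metis
    thus ?thesis using SM M0 by auto
  qed
  have L0: "0 \<le> Lst ! i" if "i < length Lst" for i
  proof -
    have "Lst ! i \<in> insert 0 S" using that setL nth_mem by metis
    thus ?thesis using f_nonneg by (auto simp: S_def)
  qed
  define t where "t i = (if i < length Lst then Lst ! i else M)" for i
  show ?thesis
  proof (intro exI[of _ t] conjI allI impI)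
    have "0 \<in> set Lst" using setL by simp
    then obtain j where j: "j < length Lst" "Lst ! j = 0" by (auto simp: in_set_conv_nth)
    hence "Lst ! 0 \<le> 0" using sorted_nth_mono[OF sortL, of 0 j] by simp
    moreover have "0 \<le> Lst ! 0" using L0[of 0] j by (cases Lst) auto
    ultimately show "t 0 = 0" using j by (cases Lst) (auto simp: t_def)
  next
    fix i assume "i < 2 * k"
    show "t i \<le> t (Suc i)"
      using sorted_nth_mono[OF sortL, of i "Suc i"] LM by (auto simp: t_def)
  next
    show "t (2*k) = Max (f ` {..<n})" using lenL k_ge1 by (simp add: t_def M_def)
  next
    fix g assume g: "is_step_approx n k t f g"
    have "wnorm2 n w (\<lambda>v. f v - g v) = 0"
      unfolding wnorm2_def
    proof (intro sum.neutral ballI)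
      fix v assume v: "v \<in> {..<n}"
      have "f v \<in> set Lst" using setL v by (auto simp: S_def)
      then obtain i where i: "i < length Lst" "Lst ! i = f v" by (auto simp: in_set_conv_nth)
      have "i \<le> 2 * k" using i lenL by simp
      hence "\<bar>f v - g v\<bar> \<le> \<bar>f v - t i\<bar>" using g v unfolding is_step_approx_def by auto
      also have "t i = f v" using i by (simp add: t_def)
      finally show "wdeg n w v * (f v - g v)^2 = 0" by simp
    qed
    thus "wnorm2 n w (\<lambda>v. f v - g v) \<le> 0" by simp
  qed
qed


theorem mainTheorem7:
  fixes n k :: nat and w :: "nat \<Rightarrow> nat \<Rightarrow> real" and f :: "nat \<Rightarrow> real"
  assumes w_nonneg: "\<forall>u<n. \<forall>v<n. w u v \<ge> 0"
    and w_sym: "\<forall>u<n. \<forall>v<n. w u v = w v u"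
    and deg_ge1: "\<forall>v<n. wdeg n w v \<ge> 1"
    and k_ge1: "1 \<le> k" and k_le_n: "k \<le> n"
    and eig_pos: "lap_eig n w k > 0"
    and f_nonneg: "\<forall>v<n. f v \<ge> 0"
    and f_unit: "wnorm2 n w f = 1"
  shows "\<exists>t :: nat \<Rightarrow> real. t 0 = 0 \<and> (\<forall>i<2*k. t i \<le> t (Suc i))
           \<and> t (2*k) = Max (f ` {..<n})
           \<and> (\<forall>g. is_step_approx n k t f g \<longrightarrow>
                 wnorm2 n w (\<lambda>v. f v - g v) \<le> 4 * rayleigh n w f / lap_eig n w k)"
proof -
  have n: "0 < n" using k_ge1 k_le_n by simp
  define M where "M = Max (f ` {..<n})"
  have fM: "f v \<le> M" if "v < n" for v using that unfolding M_def by simp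
  have M0: "0 \<le> M" using fM[of 0] f_nonneg n by force
  have frange: "\<forall>v<n. 0 \<le> f v \<and> f v \<le> M" using fM f_nonneg by auto
  define R where "R = En n w f"
  have rayR: "rayleigh n w f = R" unfolding rayleigh_En f_unit R_def by simp
  have R0: "0 \<le> R" unfolding R_def En_def using w_nonneg
    by (intro divide_nonneg_pos sum_nonneg mult_nonneg_nonneg) auto
  define lam where "lam = lap_eig n w k"
  have lam: "0 < lam" using eig_pos by (simp add: lam_def)
  show ?thesis
  proof (cases "R = 0")
    case True
    obtain t where t: "t 0 = 0" "\<forall>i<2*k. t i \<le> t (Suc i)" "t (2*k) = Max (f ` {..<n})"
      "\<forall>g. is_step_approx n k t f g \<longrightarrow> wnorm2 n w (\<lambda>v. f v - g v) \<le> 0"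
      using zero_case[OF w_nonneg w_sym deg_ge1 k_ge1 k_le_n eig_pos f_nonneg] True
      unfolding R_def by blast
    show ?thesis using t rayR True by (intro exI[of _ t]) auto
  next
    case False
    hence Rpos: "0 < R" using R0 by simp
    define C where "C = 2 * R / (real k * lam)"
    have Cpos: "0 < C" using Rpos lam k_ge1 by (simp add: C_def)
    define E where "E a b = (\<Sum>v<n. wdeg n w v * tent a b (f v)^2)" for a b
    have Eaa: "E a a = 0" for a
    proof -
      have "tent a a x = 0" for x by (simp add: tent_def)
      thus ?thesis by (simp add: E_def)
    qed
    have contE: "continuous_on S (E a)" for a S
      unfolding E_def tent_def by (intro continuous_intros)
    define nxt where "nxt a = (if E a M \<le> C then M else (SOME b. a \<le> b \<and> b \<le> M \<and> E a b = C))" for a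
    have nxt_prop: "a \<le> nxt a \<and> nxt a \<le> M \<and> E a (nxt a) \<le> C \<and> (nxt a \<noteq> M \<longrightarrow> E a (nxt a) = C)"
      if a: "a \<le> M" for a
    proof (cases "E a M \<le> C")
      case True thus ?thesis using a by (simp add: nxt_def)
    next
      case False
      have "\<exists>b. a \<le> b \<and> b \<le> M \<and> E a b = C"
        using IVT'[of "E a" a C M] Eaa[of a] Cpos False a contE by auto
      hence "(\<lambda>b. a \<le> b \<and> b \<le> M \<and> E a b = C) (SOME b. a \<le> b \<and> b \<le> M \<and> E a b = C)"
        by (rule someI_ex)
      moreover have "nxt a = (SOME b. a \<le> b \<and> b \<le> M \<and> E a b = C)" using False by (simp add: nxt_def)
      ultimately have "a \<le> nxt a \<and> nxt a \<le> M \<and> E a (nxt a) = C" by simp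
      thus ?thesis by simp
    qed
    have nxtM: "nxt M = M" using Eaa[of M] Cpos by (simp add: nxt_def)
    define t where "t i = (nxt ^^ i) 0" for i
    have tS: "t (Suc i) = nxt (t i)" for i by (simp add: t_def)
    have trange: "0 \<le> t i \<and> t i \<le> M" for i
    proof (induction i)
      case 0 thus ?case using M0 by (simp add: t_def)
    next
      case (Suc i) thus ?case using nxt_prop[of "t i"] by (simp add: tS)
    qed
    have tmono: "t i \<le> t (Suc i)" for i using nxt_prop[of "t i"] trange[of i] by (simp add: tS)
    have tE: "E (t i) (t (Suc i)) \<le> C" for i using nxt_prop[of "t i"] trange[of i] by (simp add: tS)
    have tstay: "t j = M" if "t i = M" "i \<le> j" for i j
      using that(2,1) by (induction j rule: dec_induct) (auto simp: tS nxtM)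
    have t2k: "t (2*k) = M"
    proof (rule ccontr)
      assume nM: "t (2*k) \<noteq> M"
      have tnM: "t i \<noteq> M" if "i \<le> 2*k" for i using tstay[of i "2*k"] that nM by auto
      have EC: "E (t i) (t (Suc i)) = C" if "i < 2*k" for i
        using nxt_prop[of "t i"] trange[of i] tnM[of "Suc i"] that by (simp add: tS)
      define phi where "phi i v = tent (t i) (t (Suc i)) (f v)" for i v
      have Wphi: "wnorm2 n w (phi i) = C" if "i < 2*k" for i
        using EC[OF that] unfolding wnorm2_def E_def phi_def by simp
      have Enn: "0 \<le> En n w (phi i)" for i
        unfolding En_def using w_nonneg by (intro divide_nonneg_pos sum_nonneg mult_nonneg_nonneg) auto
      have sumE: "(\<Sum>i<2*k. En n w (phi i)) \<le> R"
      proof -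
        have "(\<Sum>i<2*k. En n w (phi i)) = (\<Sum>u<n. \<Sum>v<n. w u v * (\<Sum>i<2*k. (phi i u - phi i v)^2)) / 2"
          unfolding En_def by (simp add: sum_divide_distrib[symmetric] sum_distrib_left sum.swap[of _ "{..<2*k}"])
        also have "\<dots> \<le> (\<Sum>u<n. \<Sum>v<n. w u v * (f u - f v)^2) / 2"
        proof (intro divide_right_mono sum_mono mult_left_mono)
          fix u v assume "u \<in> {..<n}" "v \<in> {..<n}"
          thus "0 \<le> w u v" using w_nonneg by auto
          show "(\<Sum>i<2*k. (phi i u - phi i v)^2) \<le> (f u - f v)^2"
            unfolding phi_def by (rule tent_sum_sq[where t=t, OF tmono])
        qed simp
        finally show ?thesis unfolding R_def En_def .
      qed
      define G where "G = {i \<in> {..<2*k}. En n w (phi i) < R / k}"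
      have cardG: "k \<le> card G"
      proof (rule ccontr)
        assume "\<not> k \<le> card G"
        hence cG: "card G + 1 \<le> k" by simp
        define B where "B = {..<2*k} - G"
        have GB: "G \<subseteq> {..<2*k}" by (auto simp: G_def)
        have cB: "card B = 2*k - card G" unfolding B_def using GB by (simp add: card_Diff_subset finite_subset)
        hence cB1: "real k + 1 \<le> real (card B)" using cG by linarith
        have "(\<Sum>i\<in>B. R / k) \<le> (\<Sum>i\<in>B. En n w (phi i))"
          by (rule sum_mono) (auto simp: B_def G_def)
        also have "\<dots> \<le> (\<Sum>i<2*k. En n w (phi i))"
          by (rule sum_mono2) (auto simp: B_def Enn)
        also have "\<dots> \<le> R" by (rule sumE)
        finally have "real (card B) * (R / k) \<le> R" by simp
        moreover have "(real k + 1) * (R / k) \<le> real (card B) * (R / k)"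
          by (rule mult_right_mono[OF cB1]) (use R0 in simp)
        moreover have "(real k + 1) * (R / k) > R"
        proof -
          have "(real k + 1) * (R / k) = R + R / k" using k_ge1 by (simp add: field_simps)
          thus ?thesis using Rpos k_ge1 by simp
        qed
        ultimately show False by linarith
      qed
      obtain T where T: "T \<subseteq> G" "card T = k" "finite T"
        using obtain_subset_with_card_n[OF cardG] by metis
      obtain h where h: "bij_betw h {0..<k} T" using ex_bij_betw_nat_finite[OF T(3)] T(2) by auto
      have hG: "h j \<in> G" if "j < k" for j using h T that unfolding bij_betw_def by auto
      have hlt: "h j < 2*k" if "j < k" for j using hG[OF that] by (simp add: G_def)
      have disj_phi: "phi i v = 0 \<or> phi i' v = 0" if "i < i'" for i i' v
      proof (rule ccontr)
        assume "\<not> (phi i v = 0 \<or> phi i' v = 0)"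
        hence "t i < f v \<and> f v < t (Suc i)" "t i' < f v \<and> f v < t (Suc i')"
          unfolding phi_def using tent_pos by blast+
        moreover have "t (Suc i) \<le> t i'" using lift_Suc_mono_le[of t, OF tmono] that by simp
        ultimately show False by linarith
      qed
      show False
      proof (rule no_k_disjoint[OF w_nonneg w_sym deg_ge1 k_ge1 k_le_n, of "\<lambda>j. phi (h j)"])
        show "\<forall>j<k. \<exists>v<n. phi (h j) v \<noteq> 0"
        proof (intro allI impI, rule ccontr)
          fix j assume j: "j < k" and "\<not> (\<exists>v<n. phi (h j) v \<noteq> 0)"
          hence "wnorm2 n w (phi (h j)) = 0" unfolding wnorm2_def by simp
          thus False using Wphi[OF hlt[OF j]] Cpos by simp
        qed
        show "\<forall>j<k. \<forall>j'<k. j \<noteq> j' \<longrightarrow> (\<forall>v<n. phi (h j) v = 0 \<or> phi (h j') v = 0)"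
        proof (intro allI impI)
          fix j j' v assume "j < k" "j' < k" "j \<noteq> j'" "v < n"
          hence "h j \<noteq> h j'" using h unfolding bij_betw_def inj_on_def by auto
          show "phi (h j) v = 0 \<or> phi (h j') v = 0"
          proof (cases "h j < h j'")
            case True thus ?thesis using disj_phi by blast
          next
            case False
            hence "h j' < h j" using \<open>h j \<noteq> h j'\<close> by simp
            thus ?thesis using disj_phi by blast
          qed
        qed
        show "\<forall>j<k. 2 * En n w (phi (h j)) < lap_eig n w k * wnorm2 n w (phi (h j))"
        proof (intro allI impI)
          fix j assume j: "j < k"
          have "En n w (phi (h j)) < R / k" using hG[OF j] by (simp add: G_def)
          moreover have "lap_eig n w k * wnorm2 n w (phi (h j)) = 2 * (R / k)"
            using Wphi[OF hlt[OF j]] lam k_ge1 by (simp add: C_def lam_def field_simps)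
          ultimately show "2 * En n w (phi (h j)) < lap_eig n w k * wnorm2 n w (phi (h j))" by simp
        qed
      qed
    qed
    show ?thesis
    proof (intro exI[of _ t] conjI allI impI)
      show "t 0 = 0" by (simp add: t_def)
      show "\<And>i. i < 2*k \<Longrightarrow> t i \<le> t (Suc i)" by (rule tmono)
      show "t (2*k) = Max (f ` {..<n})" using t2k by (simp add: M_def)
    next
      fix g assume g: "is_step_approx n k t f g"
      have "wnorm2 n w (\<lambda>v. f v - g v) \<le> (\<Sum>i<2*k. E (t i) (t (Suc i)))"
        unfolding E_def
        by (rule step_error[OF deg_ge1 _ _ t2k frange k_ge1 g]) (use tmono in \<open>auto simp: t_def\<close>)
      also have "\<dots> \<le> (\<Sum>i<2*k. C)" by (rule sum_mono) (rule tE)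
      also have "\<dots> = 4 * rayleigh n w f / lap_eig n w k"
        using k_ge1 lam by (simp add: C_def rayR lam_def field_simps)
      finally show "wnorm2 n w (\<lambda>v. f v - g v) \<le> 4 * rayleigh n w f / lap_eig n w k" .
    qed
  qed
qed

end
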